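(* Let $S\subseteq\Sigma$ and let $Q_1,\ldots,Q_n$ ($n\ge1$) be atomic assertions. Then \[ S\not\vDash Q_1\oplus\cdots\oplus Q_n \quad\text{iff}\quad \exists i.\ S\vDash\overline{Q}_i \ \text{ or }\ S\vDash(\overline{Q}_1\land\cdots\land\overline{Q}_n)\oplus\top \ \text{ or }\ S\vDash\top^\oplus . \]
   Context: Nondeterministic outcome assertions: given a satisfaction relation $\vDash_\Sigma$ between program states $\sigma\in\Sigma$ and atomic assertions, a set $S\subseteq\Sigma$ satisfies an atomic assertion $P$ iff $S\neq\emptyset$ and $\sigma\vDash_\Sigma P$ for all $\sigma\in S$. Atomic assertions are closed under negation: $\overline{Q}$ is the atomic assertion with $\sigma\vDash_\Sigma\overline{Q}$ iff $\sigma\not\vDash_\Sigma Q$. Compound assertions: $S\vDash\top$ always; $S\vDash\top^\oplus$ iff $S=\emptyset$; $S\vDash\varphi\land\psi$ iff $S\vDash\varphi$ and $S\vDash\psi$; $S\vDash\varphi\oplus\psi$ iff there are $S_1,S_2$ with $S_1\cup S_2=S$, $S_1\vDash\varphi$, $S_2\vDash\psi$. *)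

theory Defs
  imports Main
begin

datatype 'a assn =
    Atom 'a
  | Top
  | TopPlus
  | Conj "'a assn" "'a assn"
  | Oplus "'a assn" "'a assn"

fun models :: "('s \<Rightarrow> 'a \<Rightarrow> bool) \<Rightarrow> 's set \<Rightarrow> 'a assn \<Rightarrow> bool" where
  "models sat S (Atom P) = (S \<noteq> {} \<and> (\<forall>\<sigma>\<in>S. sat \<sigma> P))"
| "models sat S Top = True"
| "models sat S TopPlus = (S = {})"
| "models sat S (Conj \<phi> \<psi>) = (models sat S \<phi> \<and> models sat S \<psi>)"
| "models sat S (Oplus \<phi> \<psi>) =
     (\<exists>S1 S2. S1 \<union> S2 = S \<and> models sat S1 \<phi> \<and> models sat S2 \<psi>)"

fun oplus_atoms :: "'a list \<Rightarrow> 'a assn" where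
  "oplus_atoms [] = TopPlus"
| "oplus_atoms [Q] = Atom Q"
| "oplus_atoms (Q # Qs) = Oplus (Atom Q) (oplus_atoms Qs)"

fun conj_atoms :: "'a list \<Rightarrow> 'a assn" where
  "conj_atoms [] = Top"
| "conj_atoms [Q] = Atom Q"
| "conj_atoms (Q # Qs) = Conj (Atom Q) (conj_atoms Qs)"

end

theory Submission
  imports Defs
begin

lemma oplus_char:
  "Qs \<noteq> [] \<Longrightarrow> models sat S (oplus_atoms Qs) \<longleftrightarrow>
     (S \<noteq> {} \<and> (\<forall>\<sigma>\<in>S. \<exists>Q\<in>set Qs. sat \<sigma> Q) \<and> (\<forall>Q\<in>set Qs. \<exists>\<sigma>\<in>S. sat \<sigma> Q))"
proof (induction Qs arbitrary: S rule: oplus_atoms.induct)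
  case 1 then show ?case by simp
next
  case (2 Q) then show ?case by auto
next
  case (3 Q Q' Qs)
  have IH: "\<And>S. models sat S (oplus_atoms (Q' # Qs)) \<longleftrightarrow>
     (S \<noteq> {} \<and> (\<forall>\<sigma>\<in>S. \<exists>Q\<in>set (Q'#Qs). sat \<sigma> Q) \<and> (\<forall>Q\<in>set (Q'#Qs). \<exists>\<sigma>\<in>S. sat \<sigma> Q))"
    using 3 by simp
  show ?case
  proof
    assume "models sat S (oplus_atoms (Q # Q' # Qs))"
    then obtain S1 S2 where "S1 \<union> S2 = S" "models sat S1 (Atom Q)"
      "models sat S2 (oplus_atoms (Q' # Qs))" by auto
    then show "S \<noteq> {} \<and> (\<forall>\<sigma>\<in>S. \<exists>Q\<in>set (Q # Q' # Qs). sat \<sigma> Q) \<and> (\<forall>Qa\<in>set (Q # Q' # Qs). \<exists>\<sigma>\<in>S. sat \<sigma> Qa)"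
      unfolding IH by (simp, blast)
  next
    assume H: "S \<noteq> {} \<and> (\<forall>\<sigma>\<in>S. \<exists>Q\<in>set (Q # Q' # Qs). sat \<sigma> Q) \<and> (\<forall>Qa\<in>set (Q # Q' # Qs). \<exists>\<sigma>\<in>S. sat \<sigma> Qa)"
    let ?S1 = "{\<sigma>\<in>S. sat \<sigma> Q}"
    let ?S2 = "{\<sigma>\<in>S. \<exists>Q\<in>set (Q'#Qs). sat \<sigma> Q}"
    have "?S1 \<union> ?S2 = S" using H by auto
    moreover have "models sat ?S1 (Atom Q)" using H by auto
    moreover have "models sat ?S2 (oplus_atoms (Q' # Qs))" unfolding IH using H by (simp, blast)
    ultimately show "models sat S (oplus_atoms (Q # Q' # Qs))" by (simp only: oplus_atoms.simps models.simps) blast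
  qed
qed

lemma conj_char:
  "Qs \<noteq> [] \<Longrightarrow> models sat S (conj_atoms Qs) \<longleftrightarrow>
     (S \<noteq> {} \<and> (\<forall>\<sigma>\<in>S. \<forall>Q\<in>set Qs. sat \<sigma> Q))"
  by (induction Qs rule: conj_atoms.induct) auto

theorem lemma5p5:
  fixes sat :: "'s \<Rightarrow> 'a \<Rightarrow> bool"
    and neg :: "'a \<Rightarrow> 'a"
    and S :: "'s set"
    and Qs :: "'a list"
  assumes neg: "\<And>\<sigma> Q. sat \<sigma> (neg Q) \<longleftrightarrow> \<not> sat \<sigma> Q"
    and n: "length Qs \<ge> 1"
  shows "(\<not> models sat S (oplus_atoms Qs)) \<longleftrightarrow>
           ((\<exists>i < length Qs. models sat S (Atom (neg (Qs ! i))))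
            \<or> models sat S (Oplus (conj_atoms (map neg Qs)) Top)
            \<or> models sat S TopPlus)"
proof -
  have ne: "Qs \<noteq> []" using n by auto
  have c: "models sat S (Oplus (conj_atoms (map neg Qs)) Top) \<longleftrightarrow> (\<exists>\<sigma>\<in>S. \<forall>Q\<in>set Qs. \<not> sat \<sigma> Q)"
  proof
    assume "models sat S (Oplus (conj_atoms (map neg Qs)) Top)"
    then obtain S1 S2 where "S1 \<union> S2 = S" "models sat S1 (conj_atoms (map neg Qs))" by auto
    then show "\<exists>\<sigma>\<in>S. \<forall>Q\<in>set Qs. \<not> sat \<sigma> Q" using conj_char[of "map neg Qs" sat S1] ne neg by (simp, blast)
  next
    assume "\<exists>\<sigma>\<in>S. \<forall>Q\<in>set Qs. \<not> sat \<sigma> Q"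
    then obtain \<sigma> where s: "\<sigma> \<in> S" "\<forall>Q\<in>set Qs. \<not> sat \<sigma> Q" by auto
    have "models sat {\<sigma>} (conj_atoms (map neg Qs))" using conj_char[of "map neg Qs" sat "{\<sigma>}"] ne neg s by auto
    moreover have "{\<sigma>} \<union> S = S" using s by auto
    ultimately show "models sat S (Oplus (conj_atoms (map neg Qs)) Top)" unfolding models.simps by (intro exI[of _ "{\<sigma>}"] exI[of _ S]) simp
  qed
  have a: "(\<exists>i < length Qs. models sat S (Atom (neg (Qs ! i)))) \<longleftrightarrow> S \<noteq> {} \<and> (\<exists>Q\<in>set Qs. \<forall>\<sigma>\<in>S. \<not> sat \<sigma> Q)"
  proof
    assume "\<exists>i < length Qs. models sat S (Atom (neg (Qs ! i)))"
    then obtain i where "i < length Qs" "models sat S (Atom (neg (Qs ! i)))" by blast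
    then show "S \<noteq> {} \<and> (\<exists>Q\<in>set Qs. \<forall>\<sigma>\<in>S. \<not> sat \<sigma> Q)" using neg nth_mem by auto
  next
    assume "S \<noteq> {} \<and> (\<exists>Q\<in>set Qs. \<forall>\<sigma>\<in>S. \<not> sat \<sigma> Q)"
    then obtain Q where "S \<noteq> {}" "Q \<in> set Qs" "\<forall>\<sigma>\<in>S. \<not> sat \<sigma> Q" by blast
    then obtain i where "i < length Qs" "Qs ! i = Q" by (auto simp: in_set_conv_nth)
    then show "\<exists>i < length Qs. models sat S (Atom (neg (Qs ! i)))" using neg \<open>S \<noteq> {}\<close> \<open>\<forall>\<sigma>\<in>S. \<not> sat \<sigma> Q\<close> by auto
  qed
  show ?thesis unfolding c a oplus_char[OF ne] models.simps(3) by blast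
qed

end
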